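(* Assume (R) and (F), let $\alpha\in(0,\infty)^T$, and let $Z\in L^\infty$ have the representation $Z=\sum_{t=1}^T z_t1_{(t-1<\tau\le t)}+z_{T+1}1_{(T<\tau)}$ with real constants $z_1,\dots,z_{T+1}$. Then $L_1(\alpha,-Z)=e^{\beta_1z_1}D_1+h_1^{\beta_1}(1-D_1)$ and, for $t=2,\dots,T$, $L_t(\alpha,-Z)=\exp\Big[\beta_t\sum_{s=1}^{t-1}(z_s-z_{s+1})D_s\Big]\cdot\big[e^{\beta_tz_t}D_t+h_t^{\beta_t}(1-D_t)\big]$.
   Context: Let $T\ge1$, $\mathbb{T}=\{1,\dots,T\}$, and $(\Omega,\mathcal{F},P)$ a probability space carrying a random variable $\tau$ with $\tau(\omega)>0$ for all $\omega$ and $P(\tau=s)=0$ for all $s\in[0,\infty)$ (the future lifetime of an insured). Let $D_t=1_{(\tau\le t)}$ for $t=0,\dots,T$ and $\mathcal{H}_t=\sigma(D_s:s=0,\dots,t)$. Condition (F): the filtration is $\mathcal{F}_t=\mathcal{H}_t$, $t=0,\dots,T$; $L^\infty=L^\infty(\Omega,\mathcal{F}_T,P)$ and $E_t[Y]=E[Y\mid\mathcal{F}_t]$. Condition (R): the interest rates $r_t\ge0$ are deterministic (so $B_t=\prod_{k=1}^t(1+r_k)$ is deterministic). Let $q_t=P(\tau\le t+1\mid\tau>t)$ and $p_t=1-q_t$ for $t=0,\dots,T-1$. For $\alpha\in(0,\infty)^T$ define $\beta_t$ by $1/\beta_t=\sum_{k=t}^T 1/\alpha_k$. For $W\in L^\infty$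 define $L_T(\alpha,W)=\exp(-\alpha_T W)$ and $L_{t-1}(\alpha,W)=E_{t-1}[L_t(\alpha,W)]^{\beta_{t-1}/\beta_t}$ for $t=2,\dots,T$. Given $z_1,\dots,z_{T+1}$, define the deterministic numbers $h_T=e^{z_{T+1}}$ and $h_{t-1}=\big[e^{\beta_tz_t}q_{t-1}+h_t^{\beta_t}p_{t-1}\big]^{1/\beta_t}$ for $t=1,\dots,T$. *)

theory Defs
  imports "HOL-Probability.Probability"
begin

definition Dind :: "('a \<Rightarrow> real) \<Rightarrow> nat \<Rightarrow> 'a \<Rightarrow> real" where
  "Dind \<tau> t \<omega> = (if \<tau> \<omega> \<le> real t then 1 else 0)"

definition Hfilt :: "'a measure \<Rightarrow> ('a \<Rightarrow> real) \<Rightarrow> nat \<Rightarrow> 'a measure" where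
  "Hfilt M \<tau> t = sigma (space M)
     (\<Union>s\<in>{0..t}. {Dind \<tau> s -` A \<inter> space M | A. A \<in> sets borel})"

definition betaT :: "nat \<Rightarrow> (nat \<Rightarrow> real) \<Rightarrow> nat \<Rightarrow> real" where
  "betaT T \<alpha> t = 1 / (\<Sum>k\<in>{t..T}. 1 / \<alpha> k)"

text \<open>Backward recursion: Lback n = L_{T-n}(alpha, W).\<close>
fun Lback :: "'a measure \<Rightarrow> ('a \<Rightarrow> real) \<Rightarrow> nat \<Rightarrow> (nat \<Rightarrow> real) \<Rightarrow> ('a \<Rightarrow> real)
    \<Rightarrow> nat \<Rightarrow> 'a \<Rightarrow> real" where
  "Lback M \<tau> T \<alpha> W 0 = (\<lambda>\<omega>. exp (- \<alpha> T * W \<omega>))"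
| "Lback M \<tau> T \<alpha> W (Suc n) =
     (\<lambda>\<omega>. real_cond_exp M (Hfilt M \<tau> (T - Suc n)) (Lback M \<tau> T \<alpha> W n) \<omega>
            powr (betaT T \<alpha> (T - Suc n) / betaT T \<alpha> (T - n)))"

definition Lfun :: "'a measure \<Rightarrow> ('a \<Rightarrow> real) \<Rightarrow> nat \<Rightarrow> (nat \<Rightarrow> real) \<Rightarrow> ('a \<Rightarrow> real)
    \<Rightarrow> nat \<Rightarrow> 'a \<Rightarrow> real" where
  "Lfun M \<tau> T \<alpha> W t = Lback M \<tau> T \<alpha> W (T - t)"

definition qdeath :: "'a measure \<Rightarrow> ('a \<Rightarrow> real) \<Rightarrow> nat \<Rightarrow> real" where
  "qdeath M \<tau> t = cond_prob M (\<lambda>\<omega>. \<tau> \<omega> \<le> real t + 1) (\<lambda>\<omega>. \<tau> \<omega> > real t)"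

definition psurv :: "'a measure \<Rightarrow> ('a \<Rightarrow> real) \<Rightarrow> nat \<Rightarrow> real" where
  "psurv M \<tau> t = 1 - qdeath M \<tau> t"

text \<open>Backward recursion: hback n = h_{T-n}.\<close>
fun hback :: "'a measure \<Rightarrow> ('a \<Rightarrow> real) \<Rightarrow> nat \<Rightarrow> (nat \<Rightarrow> real) \<Rightarrow> (nat \<Rightarrow> real)
    \<Rightarrow> nat \<Rightarrow> real" where
  "hback M \<tau> T \<alpha> z 0 = exp (z (T + 1))"
| "hback M \<tau> T \<alpha> z (Suc n) =
     (exp (betaT T \<alpha> (T - n) * z (T - n)) * qdeath M \<tau> (T - Suc n)
      + hback M \<tau> T \<alpha> z n powr betaT T \<alpha> (T - n) * psurv M \<tau> (T - Suc n))
     powr (1 / betaT T \<alpha> (T - n))"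

definition hfun :: "'a measure \<Rightarrow> ('a \<Rightarrow> real) \<Rightarrow> nat \<Rightarrow> (nat \<Rightarrow> real) \<Rightarrow> (nat \<Rightarrow> real)
    \<Rightarrow> nat \<Rightarrow> real" where
  "hfun M \<tau> T \<alpha> z t = hback M \<tau> T \<alpha> z (T - t)"

end

theory Submission
  imports Defs
begin

lemma atoms_eval:
  fixes x :: real and a :: "nat \<Rightarrow> real"
  assumes "x > 0"
  shows "(\<Sum>s\<in>{1..n}. a s * ((if x \<le> real s then 1 else 0) - (if x \<le> real (s-1) then 1 else 0)))
         + b * (1 - (if x \<le> real n then 1 else 0)) = (if x \<le> real n then a (nat \<lceil>x\<rceil>) else b)"
proof (induction n)
  case 0
  then show ?case using assms by simp
next
  case (Suc n)
  have c: "n < x \<Longrightarrow> x \<le> real (Suc n) \<Longrightarrow> nat \<lceil>x\<rceil> = Suc n"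
  proof -
    assume "n < x" "x \<le> real (Suc n)"
    then have "\<lceil>x\<rceil> = int (Suc n)" by (simp add: ceiling_eq_iff)
    then show ?thesis by simp
  qed
  show ?case
  proof (cases "x \<le> real n")
    case True
    then show ?thesis using Suc.IH by (simp add: sum.cl_ivl_Suc)
  next
    case False
    then show ?thesis using Suc.IH c by (auto simp add: sum.cl_ivl_Suc algebra_simps)
  qed
qed

lemma tele_eval:
  fixes x :: real and z :: "nat \<Rightarrow> real"
  assumes "x > 0"
  shows "(\<Sum>s\<in>{1..n}. (z s - z (s+1)) * (if x \<le> real s then 1 else 0))
     = (if x \<le> real n then z (nat \<lceil>x\<rceil>) - z (n+1) else 0)"
proof (induction n)
  case 0
  then show ?case using assms by simp
next
  case (Suc n)
  have c: "n < x \<Longrightarrow> x \<le> real (Suc n) \<Longrightarrow> nat \<lceil>x\<rceil> = Suc n"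
  proof -
    assume "n < x" "x \<le> real (Suc n)"
    then have "\<lceil>x\<rceil> = int (Suc n)" by (simp add: ceiling_eq_iff)
    then show ?thesis by simp
  qed
  show ?case
  proof (cases "x \<le> real n")
    case True
    then show ?thesis using Suc.IH by (simp add: sum.cl_ivl_Suc)
  next
    case False
    then show ?thesis using Suc.IH c by (auto simp add: sum.cl_ivl_Suc algebra_simps)
  qed
qed

lemma Hfilt_space[simp]: "space (Hfilt M \<tau> t) = space M"
  by (simp add: Hfilt_def space_measure_of_conv)

lemma Hfilt_sets: "sets (Hfilt M \<tau> t) = sigma_sets (space M)
     (\<Union>s\<in>{0..t}. {Dind \<tau> s -` A \<inter> space M | A. A \<in> sets borel})"
  unfolding Hfilt_def by (rule sets_measure_of) auto

lemma Hfilt_inv: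
  assumes "A \<in> sets (Hfilt M \<tau> t)" "\<omega> \<in> space M" "\<omega>' \<in> space M"
    "\<forall>s\<le>t. Dind \<tau> s \<omega> = Dind \<tau> s \<omega>'"
  shows "\<omega> \<in> A \<longleftrightarrow> \<omega>' \<in> A"
proof -
  have "A \<in> sigma_sets (space M) (\<Union>s\<in>{0..t}. {Dind \<tau> s -` A \<inter> space M | A. A \<in> sets borel})"
    using assms(1) Hfilt_sets by blast
  then have "\<forall>x\<in>space M. \<forall>y\<in>space M. (\<forall>s\<le>t. Dind \<tau> s x = Dind \<tau> s y) \<longrightarrow> (x \<in> A \<longleftrightarrow> y \<in> A)"
  proof (induct rule: sigma_sets.induct)
    case (Basic a)
    then obtain s B where sB: "s \<le> t" "a = Dind \<tau> s -` B \<inter> space M" by auto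
    show ?case
    proof (intro ballI impI)
      fix x y assume xy: "x \<in> space M" "y \<in> space M" "\<forall>s\<le>t. Dind \<tau> s x = Dind \<tau> s y"
      then have "Dind \<tau> s x = Dind \<tau> s y" using sB(1) by blast
      then show "x \<in> a \<longleftrightarrow> y \<in> a" using sB(2) xy(1,2) by simp
    qed
  next
    case Empty
    show ?case by simp
  next
    case (Compl a)
    show ?case
    proof (intro ballI impI)
      fix x y assume xy: "x \<in> space M" "y \<in> space M" "\<forall>s\<le>t. Dind \<tau> s x = Dind \<tau> s y"
      have "x \<in> a \<longleftrightarrow> y \<in> a" using Compl(2)[rule_format, OF xy(1,2) xy(3)[rule_format]] .
      then show "x \<in> space M - a \<longleftrightarrow> y \<in> space M - a" using xy(1,2) by blast
    qed
  next
    case (Union a)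
    show ?case
    proof (intro ballI impI)
      fix x y assume xy: "x \<in> space M" "y \<in> space M" "\<forall>s\<le>t. Dind \<tau> s x = Dind \<tau> s y"
      have "\<And>i. x \<in> a i \<longleftrightarrow> y \<in> a i" using Union(2)[rule_format, OF xy(1,2) xy(3)[rule_format]] .
      then show "x \<in> \<Union>(range a) \<longleftrightarrow> y \<in> \<Union>(range a)" by blast
    qed
  qed
  then show ?thesis using assms by blast
qed

lemma Dind_meas_M:
  assumes "\<tau> \<in> borel_measurable M"
  shows "Dind \<tau> s \<in> borel_measurable M"
proof -
  have "{x\<in>space M. \<tau> x \<le> real s} \<in> sets M" using assms unfolding borel_measurable_iff_le by blast
  then show ?thesis unfolding Dind_def by (intro measurable_If measurable_const) auto
qed

lemma Dind_meas_H:
  assumes "s \<le> t"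
  shows "Dind \<tau> s \<in> borel_measurable (Hfilt M \<tau> t)"
proof (rule measurableI)
  fix A :: "real set" assume A: "A \<in> sets borel"
  have "Dind \<tau> s -` A \<inter> space M \<in> {Dind \<tau> s -` A \<inter> space M | A. A \<in> sets borel}"
    using A by blast
  then have "Dind \<tau> s -` A \<inter> space M \<in> (\<Union>s\<in>{0..t}. {Dind \<tau> s -` A \<inter> space M | A. A \<in> sets borel})"
    using assms by (intro UN_I[of s]) auto
  then show "Dind \<tau> s -` A \<inter> space (Hfilt M \<tau> t) \<in> sets (Hfilt M \<tau> t)"
    unfolding Hfilt_sets Hfilt_space by (rule sigma_sets.Basic)
qed simp

lemma (in prob_space) Hfilt_sfs:
  assumes "\<tau> \<in> borel_measurable M"
  shows "sigma_finite_subalgebra M (Hfilt M \<tau> t)"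
proof -
  have gen: "(\<Union>s\<in>{0..t}. {Dind \<tau> s -` A \<inter> space M | A. A \<in> sets borel}) \<subseteq> sets M"
  proof
    fix X assume "X \<in> (\<Union>s\<in>{0..t}. {Dind \<tau> s -` A \<inter> space M | A. A \<in> sets borel})"
    then obtain s B where "X = Dind \<tau> s -` B \<inter> space M" "B \<in> sets borel" by blast
    then show "X \<in> sets M" using measurable_sets[OF Dind_meas_M[OF assms]] by simp
  qed
  have "sets (Hfilt M \<tau> t) \<subseteq> sets M"
    unfolding Hfilt_sets by (rule sets.sigma_sets_subset[OF gen])
  then have sa: "subalgebra M (Hfilt M \<tau> t)" unfolding subalgebra_def by simp
  have fm: "finite_measure M" by (rule finite_measureI) simp
  have "finite_measure_subalgebra M (Hfilt M \<tau> t)"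
    by (rule finite_measure_subalgebra.intro[OF fm finite_measure_subalgebra_axioms.intro[OF sa]])
  then show ?thesis by (rule finite_measure_subalgebra_is_sigma_finite)
qed

lemma (in prob_space) Dind_int: assumes "\<tau> \<in> borel_measurable M" shows "integrable M (Dind \<tau> s)"
proof (rule integrable_const_bound[where B=1])
  show "AE x in M. norm (Dind \<tau> s x) \<le> 1" by (simp add: Dind_def)
  show "Dind \<tau> s \<in> borel_measurable M" using Dind_meas_M[OF assms] .
qed

lemma (in prob_space) Dind_E: assumes "\<tau> \<in> borel_measurable M"
  shows "(\<integral>\<omega>. Dind \<tau> s \<omega> \<partial>M) = prob {\<omega>\<in>space M. \<tau> \<omega> \<le> real s}"
proof -
  have e: "{\<omega>\<in>space M. \<tau> \<omega> \<le> real s} \<inter> space M = {\<omega>\<in>space M. \<tau> \<omega> \<le> real s}" by blast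
  have "(\<integral>\<omega>. Dind \<tau> s \<omega> \<partial>M) = (\<integral>\<omega>. indicator {\<omega>\<in>space M. \<tau> \<omega> \<le> real s} \<omega> \<partial>M)"
    by (rule Bochner_Integration.integral_cong) (auto simp: Dind_def)
  also have "\<dots> = measure M ({\<omega>\<in>space M. \<tau> \<omega> \<le> real s} \<inter> space M)" by simp
  finally show ?thesis using e by simp
qed

lemma (in prob_space) cond_step:
  fixes \<tau> :: "'a \<Rightarrow> real" and L :: "'a \<Rightarrow> real" and z :: "nat \<Rightarrow> real" and b H :: real
  assumes tm: "\<tau> \<in> borel_measurable M" and pos: "\<forall>\<omega>\<in>space M. \<tau> \<omega> > 0"
    and AEL: "AE \<omega> in M. L \<omega> = (if \<tau> \<omega> \<le> real (Suc m) then exp (b * z (nat \<lceil>\<tau> \<omega>\<rceil>)) else H)"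
    and Lm: "L \<in> borel_measurable M"
  shows "AE \<omega> in M. real_cond_exp M (Hfilt M \<tau> m) L \<omega> =
     (if \<tau> \<omega> \<le> real m then exp (b * z (nat \<lceil>\<tau> \<omega>\<rceil>))
      else exp (b * z (Suc m)) * qdeath M \<tau> m + H * psurv M \<tau> m)"
proof -
  interpret S: sigma_finite_subalgebra M "Hfilt M \<tau> m" using Hfilt_sfs[OF tm] .
  define F where "F = Hfilt M \<tau> m"
  define a where "a s = exp (b * z s)" for s
  define D where "D s = Dind \<tau> s" for s
  define S where "S \<omega> = (\<Sum>s\<in>{1..m}. a s * (D s \<omega> - D (s-1) \<omega>))" for \<omega>
  define f where "f \<omega> = a (Suc m) * (D (Suc m) \<omega> - D m \<omega>) + H * (1 - D (Suc m) \<omega>)" for \<omega>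
  define c where "c = a (Suc m) * qdeath M \<tau> m + H * psurv M \<tau> m"
  define g where "g \<omega> = c * (1 - D m \<omega>)" for \<omega>
  have Dm: "\<And>s. D s \<in> borel_measurable M" unfolding D_def by (rule Dind_meas_M[OF tm])
  have Di: "\<And>s. integrable M (D s)" unfolding D_def by (rule Dind_int[OF tm])
  have DH: "\<And>s. s \<le> m \<Longrightarrow> D s \<in> borel_measurable F" unfolding D_def F_def by (rule Dind_meas_H)
  have Dv: "\<And>s \<omega>. D s \<omega> = (if \<tau> \<omega> \<le> real s then 1 else 0)" by (simp add: D_def Dind_def)
  have SH: "S \<in> borel_measurable F"
  proof -
    have "\<And>s. s \<in> {1..m} \<Longrightarrow> (\<lambda>\<omega>. a s * (D s \<omega> - D (s-1) \<omega>)) \<in> borel_measurable F"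
    proof -
      fix s assume "s \<in> {1..m}"
      then have h1: "D s \<in> borel_measurable F" and h2: "D (s-1) \<in> borel_measurable F"
        using DH by auto
      show "(\<lambda>\<omega>. a s * (D s \<omega> - D (s-1) \<omega>)) \<in> borel_measurable F"
        by (rule borel_measurable_times[OF borel_measurable_const borel_measurable_diff[OF h1 h2]])
    qed
    then have "(\<lambda>\<omega>. \<Sum>s\<in>{1..m}. a s * (D s \<omega> - D (s-1) \<omega>)) \<in> borel_measurable F"
      by (rule borel_measurable_sum[where f="\<lambda>s \<omega>. a s * (D s \<omega> - D (s-1) \<omega>)"])
    then show ?thesis unfolding S_def .
  qed
  have Si: "integrable M S"
  proof -
    have "\<And>s. s \<in> {1..m} \<Longrightarrow> integrable M (\<lambda>\<omega>. a s * (D s \<omega> - D (s-1) \<omega>))"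
      by (rule integrable_mult_right[OF Bochner_Integration.integrable_diff[OF Di Di]])
    then have "integrable M (\<lambda>\<omega>. \<Sum>s\<in>{1..m}. a s * (D s \<omega> - D (s-1) \<omega>))"
      by (rule Bochner_Integration.integrable_sum[where f="\<lambda>s \<omega>. a s * (D s \<omega> - D (s-1) \<omega>)"])
    then show ?thesis unfolding S_def .
  qed
  have fi: "integrable M f" unfolding f_def
    by (rule Bochner_Integration.integrable_add[OF integrable_mult_right[OF Bochner_Integration.integrable_diff[OF Di Di]]
        integrable_mult_right[OF Bochner_Integration.integrable_diff[OF integrable_const Di]]])
  have gi: "integrable M g" unfolding g_def
    by (rule integrable_mult_right[OF Bochner_Integration.integrable_diff[OF integrable_const Di]])
  have gH: "g \<in> borel_measurable F"
  proof -
    have "(\<lambda>\<omega>. c * (1 - D m \<omega>)) \<in> borel_measurable F"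
      by (rule borel_measurable_times[OF borel_measurable_const borel_measurable_diff[OF borel_measurable_const DH]]) simp
    then show ?thesis unfolding g_def .
  qed
  have Esplit: "\<forall>\<omega>\<in>space M. (if \<tau> \<omega> \<le> real (Suc m) then exp (b * z (nat \<lceil>\<tau> \<omega>\<rceil>)) else H) = S \<omega> + f \<omega>"
  proof
    fix \<omega> assume \<omega>: "\<omega> \<in> space M"
    have "S \<omega> + f \<omega> = (\<Sum>s\<in>{1..Suc m}. a s * (D s \<omega> - D (s-1) \<omega>)) + H * (1 - D (Suc m) \<omega>)"
      by (simp add: S_def f_def sum.cl_ivl_Suc)
    also have "\<dots> = (if \<tau> \<omega> \<le> real (Suc m) then a (nat \<lceil>\<tau> \<omega>\<rceil>) else H)"
      unfolding Dv by (rule atoms_eval) (use pos \<omega> in blast)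
    finally show "(if \<tau> \<omega> \<le> real (Suc m) then exp (b * z (nat \<lceil>\<tau> \<omega>\<rceil>)) else H) = S \<omega> + f \<omega>"
      by (simp add: a_def)
  qed
  have Gsplit: "\<forall>\<omega>\<in>space M. S \<omega> + g \<omega> = (if \<tau> \<omega> \<le> real m then exp (b * z (nat \<lceil>\<tau> \<omega>\<rceil>))
      else exp (b * z (Suc m)) * qdeath M \<tau> m + H * psurv M \<tau> m)"
  proof
    fix \<omega> assume \<omega>: "\<omega> \<in> space M"
    have "S \<omega> + g \<omega> = (\<Sum>s\<in>{1..m}. a s * (D s \<omega> - D (s-1) \<omega>)) + c * (1 - D m \<omega>)"
      by (simp add: S_def g_def)
    also have "\<dots> = (if \<tau> \<omega> \<le> real m then a (nat \<lceil>\<tau> \<omega>\<rceil>) else c)"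
      unfolding Dv by (rule atoms_eval) (use pos \<omega> in blast)
    finally show "S \<omega> + g \<omega> = (if \<tau> \<omega> \<le> real m then exp (b * z (nat \<lceil>\<tau> \<omega>\<rceil>))
      else exp (b * z (Suc m)) * qdeath M \<tau> m + H * psurv M \<tau> m)"
      by (simp add: a_def c_def)
  qed
  have Sm: "S \<in> borel_measurable M" using Si by (rule borel_measurable_integrable)
  have fm: "f \<in> borel_measurable M" using fi by (rule borel_measurable_integrable)
  have 1: "AE \<omega> in M. real_cond_exp M F L \<omega> = real_cond_exp M F (\<lambda>\<omega>. S \<omega> + f \<omega>) \<omega>"
  proof (rule S.real_cond_exp_cong[unfolded F_def[symmetric]])
    show "AE \<omega> in M. L \<omega> = S \<omega> + f \<omega>" using AEL AE_space
    proof eventually_elim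
      case (elim \<omega>)
      then show ?case using Esplit by metis
    qed
    show "L \<in> borel_measurable M" by (rule Lm)
    show "(\<lambda>\<omega>. S \<omega> + f \<omega>) \<in> borel_measurable M" using Sm fm by (rule borel_measurable_add)
  qed
  have 2: "AE \<omega> in M. real_cond_exp M F (\<lambda>\<omega>. S \<omega> + f \<omega>) \<omega> = real_cond_exp M F S \<omega> + real_cond_exp M F f \<omega>"
    unfolding F_def by (rule S.real_cond_exp_add[OF Si fi])
  have 3: "AE \<omega> in M. real_cond_exp M F S \<omega> = S \<omega>"
    unfolding F_def by (rule S.real_cond_exp_F_meas[OF Si SH[unfolded F_def]])
  have 4: "AE \<omega> in M. real_cond_exp M F f \<omega> = g \<omega>"
    unfolding F_def
  proof (rule S.real_cond_exp_charact[OF _ fi gi gH[unfolded F_def]])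
    fix A assume A: "A \<in> sets (Hfilt M \<tau> m)"
    have Asp: "A \<subseteq> space M" using sets.sets_into_space[OF A] by simp
    have zero: "\<And>\<omega>. \<tau> \<omega> \<le> real m \<Longrightarrow> f \<omega> = 0 \<and> g \<omega> = 0"
      by (simp add: f_def g_def Dv)
    define P where "P s = prob {\<omega>\<in>space M. \<tau> \<omega> \<le> real s}" for s
    have Pset: "\<And>s::nat. {\<omega>\<in>space M. \<tau> \<omega> \<le> real s} \<in> sets M"
      using tm unfolding borel_measurable_iff_le by blast
    have ED: "\<And>s. (\<integral>\<omega>. D s \<omega> \<partial>M) = P s" unfolding D_def P_def by (rule Dind_E[OF tm])
    have intf: "(\<integral>\<omega>. f \<omega> \<partial>M) = a (Suc m) * (P (Suc m) - P m) + H * (1 - P (Suc m))"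
      unfolding f_def by (simp add: Di ED prob_space)
    have intg: "(\<integral>\<omega>. g \<omega> \<partial>M) = c * (1 - P m)"
      unfolding g_def by (simp add: Di ED prob_space)
    have key: "c * (1 - P m) = a (Suc m) * (P (Suc m) - P m) + H * (1 - P (Suc m))"
    proof -
      have sub: "{\<omega>\<in>space M. \<tau> \<omega> \<le> real m} \<subseteq> {\<omega>\<in>space M. \<tau> \<omega> \<le> real (Suc m)}" by auto
      have e1: "{\<omega>\<in>space M. \<tau> \<omega> \<le> real m + 1 \<and> real m < \<tau> \<omega>}
          = {\<omega>\<in>space M. \<tau> \<omega> \<le> real (Suc m)} - {\<omega>\<in>space M. \<tau> \<omega> \<le> real m}" by auto
      have e2: "{\<omega>\<in>space M. real m < \<tau> \<omega>} = space M - {\<omega>\<in>space M. \<tau> \<omega> \<le> real m}" by auto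
      have num: "prob {\<omega>\<in>space M. \<tau> \<omega> \<le> real m + 1 \<and> real m < \<tau> \<omega>} = P (Suc m) - P m"
        unfolding e1 P_def by (rule finite_measure_Diff[OF Pset Pset sub])
      have den: "prob {\<omega>\<in>space M. real m < \<tau> \<omega>} = 1 - P m"
        unfolding e2 P_def by (rule prob_compl[OF Pset])
      have q: "qdeath M \<tau> m = (P (Suc m) - P m) / (1 - P m)"
        unfolding qdeath_def cond_prob_def using num den by simp
      have mono: "P m \<le> P (Suc m)" unfolding P_def by (rule finite_measure_mono[OF sub Pset])
      have le1: "P (Suc m) \<le> 1" unfolding P_def by (rule prob_le_1)
      show ?thesis
      proof (cases "1 - P m = 0")
        case True
        then have "P m = 1" "P (Suc m) = 1" using mono le1 by auto
        then show ?thesis by simp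
      next
        case False
        have qd: "qdeath M \<tau> m * (1 - P m) = P (Suc m) - P m" using False unfolding q by simp
        have "c * (1 - P m) = a (Suc m) * (qdeath M \<tau> m * (1 - P m))
            + H * ((1 - P m) - qdeath M \<tau> m * (1 - P m))"
          unfolding c_def psurv_def by (simp add: algebra_simps)
        then show ?thesis unfolding qd by simp
      qed
    qed
    show "(\<integral>x\<in>A. f x \<partial>M) = (\<integral>x\<in>A. g x \<partial>M)"
    proof (cases "\<exists>\<omega>0\<in>A. \<tau> \<omega>0 > real m")
      case True
      then obtain \<omega>0 where \<omega>0: "\<omega>0 \<in> A" "\<tau> \<omega>0 > real m" by blast
      have allin: "\<omega> \<in> A" if "\<omega> \<in> space M" "\<tau> \<omega> > real m" for \<omega>
      proof -
        have "\<forall>s\<le>m. Dind \<tau> s \<omega>0 = Dind \<tau> s \<omega>"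
        proof (intro allI impI)
          fix s assume "s \<le> m"
          then have "real s \<le> real m" by simp
          then show "Dind \<tau> s \<omega>0 = Dind \<tau> s \<omega>" using \<omega>0(2) that(2) by (simp add: Dind_def)
        qed
        then show ?thesis using Hfilt_inv[OF A _ that(1)] \<omega>0(1) Asp by blast
      qed
      have "(\<integral>x\<in>A. f x \<partial>M) = (\<integral>x. f x \<partial>M)"
        unfolding set_lebesgue_integral_def
      proof (rule Bochner_Integration.integral_cong[OF refl])
        fix x assume x: "x \<in> space M"
        show "indicator A x *\<^sub>R f x = f x"
        proof (cases "x \<in> A")
          case False
          then have "\<tau> x \<le> real m" using allin x by force
          then show ?thesis using zero by simp
        qed simp
      qed
      moreover have "(\<integral>x\<in>A. g x \<partial>M) = (\<integral>x. g x \<partial>M)"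
        unfolding set_lebesgue_integral_def
      proof (rule Bochner_Integration.integral_cong[OF refl])
        fix x assume x: "x \<in> space M"
        show "indicator A x *\<^sub>R g x = g x"
        proof (cases "x \<in> A")
          case False
          then have "\<tau> x \<le> real m" using allin x by force
          then show ?thesis using zero by simp
        qed simp
      qed
      ultimately show ?thesis using intf intg key by simp
    next
      case False
      then have inA: "\<And>x. x \<in> A \<Longrightarrow> \<tau> x \<le> real m" by force
      have "(\<integral>x\<in>A. f x \<partial>M) = (\<integral>x. 0 \<partial>M)"
        unfolding set_lebesgue_integral_def
      proof (rule Bochner_Integration.integral_cong[OF refl])
        fix x assume x: "x \<in> space M"
        show "indicator A x *\<^sub>R f x = 0"
          by (cases "x \<in> A") (simp_all add: inA zero)
      qed
      moreover have "(\<integral>x\<in>A. g x \<partial>M) = (\<integral>x. 0 \<partial>M)"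
        unfolding set_lebesgue_integral_def
      proof (rule Bochner_Integration.integral_cong[OF refl])
        fix x assume x: "x \<in> space M"
        show "indicator A x *\<^sub>R g x = 0"
          by (cases "x \<in> A") (simp_all add: inA zero)
      qed
      ultimately show ?thesis by simp
    qed
  qed
  show ?thesis using 1 2 3 4 AE_space
  proof eventually_elim
    case (elim \<omega>)
    then show ?case using Gsplit F_def by metis
  qed
qed

theorem proposition4p2:
  fixes M :: "'a measure" and \<tau> :: "'a \<Rightarrow> real" and T :: nat
    and \<alpha> :: "nat \<Rightarrow> real" and z :: "nat \<Rightarrow> real" and Z :: "'a \<Rightarrow> real"
  assumes "prob_space M"
    and "\<tau> \<in> borel_measurable M"
    and "\<forall>\<omega>\<in>space M. \<tau> \<omega> > 0"
    and "\<forall>s::real. s \<ge> 0 \<longrightarrow> measure M {\<omega>\<in>space M. \<tau> \<omega> = s} = 0"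
    and "T \<ge> 1"
    and "\<forall>k\<in>{1..T}. \<alpha> k > 0"
    and "\<forall>\<omega>. Z \<omega> = (\<Sum>t\<in>{1..T}. z t * indicator {\<omega>'. real t - 1 < \<tau> \<omega>' \<and> \<tau> \<omega>' \<le> real t} \<omega>)
                 + z (T + 1) * indicator {\<omega>'. real T < \<tau> \<omega>'} \<omega>"
  shows "(AE \<omega> in M. Lfun M \<tau> T \<alpha> (\<lambda>x. - Z x) 1 \<omega> =
            exp (betaT T \<alpha> 1 * z 1) * Dind \<tau> 1 \<omega>
            + hfun M \<tau> T \<alpha> z 1 powr betaT T \<alpha> 1 * (1 - Dind \<tau> 1 \<omega>))
       \<and> (\<forall>t\<in>{2..T}. AE \<omega> in M. Lfun M \<tau> T \<alpha> (\<lambda>x. - Z x) t \<omega> =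
            exp (betaT T \<alpha> t * (\<Sum>s\<in>{1..t-1}. (z s - z (s + 1)) * Dind \<tau> s \<omega>))
            * (exp (betaT T \<alpha> t * z t) * Dind \<tau> t \<omega>
               + hfun M \<tau> T \<alpha> z t powr betaT T \<alpha> t * (1 - Dind \<tau> t \<omega>)))"
proof -
  interpret prob_space M by (rule assms(1))
  note tm[measurable] = assms(2)
  have pos: "\<forall>\<omega>\<in>space M. \<tau> \<omega> > 0" using assms(3) .
  define \<beta> where "\<beta> = betaT T \<alpha>"
  define h where "h = hfun M \<tau> T \<alpha> z"
  define L where "L = Lback M \<tau> T \<alpha> (\<lambda>x. - Z x)"
  define E where "E t \<omega> = (if \<tau> \<omega> \<le> real t then exp (\<beta> t * z (nat \<lceil>\<tau> \<omega>\<rceil>)) else h t powr \<beta> t)" for t \<omega>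
  have \<beta>pos: "\<beta> t > 0" if "1 \<le> t" "t \<le> T" for t
  proof -
    have "(\<Sum>k\<in>{t..T}. 1 / \<alpha> k) > 0" using that assms(6) by (intro sum_pos) auto
    then show ?thesis by (simp add: \<beta>_def betaT_def)
  qed
  have \<beta>T: "\<beta> T = \<alpha> T" by (simp add: \<beta>_def betaT_def)
  have Zeq: "Z = (\<lambda>\<omega>. (\<Sum>t\<in>{1..T}. z t * (if real t - 1 < \<tau> \<omega> \<and> \<tau> \<omega> \<le> real t then 1 else 0))
       + z (T + 1) * (if real T < \<tau> \<omega> then 1 else 0))"
    by (rule ext) (simp add: assms(7) indicator_def of_bool_def)
  have Zm: "Z \<in> borel_measurable M" unfolding Zeq by measurable
  have Lm: "L n \<in> borel_measurable M" for n
  proof (induction n)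
    case 0
    show ?case unfolding L_def Lback.simps using Zm by simp
  next
    case (Suc n)
    have cm[measurable]: "real_cond_exp M (Hfilt M \<tau> (T - Suc n)) (L n) \<in> borel_measurable M"
      by (rule borel_measurable_cond_exp2)
    have "L (Suc n) = (\<lambda>\<omega>. real_cond_exp M (Hfilt M \<tau> (T - Suc n)) (L n) \<omega> powr (betaT T \<alpha> (T - Suc n) / betaT T \<alpha> (T - n)))"
      by (simp add: L_def)
    then show ?case by simp
  qed
  have claim: "n < T \<Longrightarrow> AE \<omega> in M. L n \<omega> = E (T - n) \<omega>" for n
  proof (induction n)
    case 0
    have "\<forall>\<omega>\<in>space M. L 0 \<omega> = E T \<omega>"
    proof
      fix \<omega> assume \<omega>: "\<omega> \<in> space M"
      have tp: "\<tau> \<omega> > 0" using pos \<omega> by blast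
      have s1: "(\<Sum>t\<in>{1..T}. z t * (if real t - 1 < \<tau> \<omega> \<and> \<tau> \<omega> \<le> real t then 1 else 0))
          = (\<Sum>t\<in>{1..T}. z t * ((if \<tau> \<omega> \<le> real t then 1 else 0) - (if \<tau> \<omega> \<le> real (t-1) then 1 else 0)))"
        by (rule sum.cong) (auto simp: of_nat_diff)
      have "Z \<omega> = (\<Sum>t\<in>{1..T}. z t * ((if \<tau> \<omega> \<le> real t then 1 else 0) - (if \<tau> \<omega> \<le> real (t-1) then 1 else 0)))
          + z (T+1) * (1 - (if \<tau> \<omega> \<le> real T then 1 else 0))"
        unfolding s1[symmetric] by (subst Zeq) auto
      also have "\<dots> = (if \<tau> \<omega> \<le> real T then z (nat \<lceil>\<tau> \<omega>\<rceil>) else z (T+1))"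
        by (rule atoms_eval[OF tp])
      finally have Zv: "Z \<omega> = (if \<tau> \<omega> \<le> real T then z (nat \<lceil>\<tau> \<omega>\<rceil>) else z (T+1))" .
      have hT: "h T = exp (z (T+1))" by (simp add: h_def hfun_def)
      show "L 0 \<omega> = E T \<omega>"
        by (simp add: L_def E_def Zv \<beta>T hT exp_powr_real mult.commute)
    qed
    then show ?case by (auto intro!: AE_I2)
  next
    case (Suc n)
    define m where "m = T - Suc n"
    have Tn: "T - n = Suc m" using Suc.prems m_def by simp
    have e1: "T - m = Suc n" using Suc.prems m_def by simp
    have e2: "T - Suc m = n" using Suc.prems m_def by simp
    have IH: "AE \<omega> in M. L n \<omega> = E (T - n) \<omega>" using Suc.IH Suc.prems by simp
    have bs: "\<beta> (Suc m) > 0" by (rule \<beta>pos) (use Suc.prems m_def in auto)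
    have IH': "AE \<omega> in M. L n \<omega> = (if \<tau> \<omega> \<le> real (Suc m) then exp (\<beta> (Suc m) * z (nat \<lceil>\<tau> \<omega>\<rceil>))
        else h (Suc m) powr \<beta> (Suc m))"
      using IH unfolding Tn E_def .
    have ce: "AE \<omega> in M. real_cond_exp M (Hfilt M \<tau> m) (L n) \<omega> =
      (if \<tau> \<omega> \<le> real m then exp (\<beta> (Suc m) * z (nat \<lceil>\<tau> \<omega>\<rceil>))
       else exp (\<beta> (Suc m) * z (Suc m)) * qdeath M \<tau> m + h (Suc m) powr \<beta> (Suc m) * psurv M \<tau> m)"
      by (rule cond_step[OF tm pos IH' Lm])
    have Lsuc: "L (Suc n) \<omega> = real_cond_exp M (Hfilt M \<tau> m) (L n) \<omega> powr (\<beta> m / \<beta> (Suc m))" for \<omega>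
      by (simp add: L_def \<beta>_def m_def[symmetric] Tn)
    have hm: "h m = (exp (\<beta> (Suc m) * z (Suc m)) * qdeath M \<tau> m + h (Suc m) powr \<beta> (Suc m) * psurv M \<tau> m)
        powr (1 / \<beta> (Suc m))"
      by (simp add: h_def hfun_def e1 e2 Tn \<beta>_def m_def[symmetric])
    have "AE \<omega> in M. L (Suc n) \<omega> = E m \<omega>"
      using ce
    proof eventually_elim
      case (elim \<omega>)
      show ?case
      proof (cases "\<tau> \<omega> \<le> real m")
        case True
        have "L (Suc n) \<omega> = exp (\<beta> (Suc m) * z (nat \<lceil>\<tau> \<omega>\<rceil>)) powr (\<beta> m / \<beta> (Suc m))"
          unfolding Lsuc elim using True by simp
        also have "\<dots> = exp (\<beta> m * z (nat \<lceil>\<tau> \<omega>\<rceil>))"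
          unfolding exp_powr_real using bs by (simp add: field_simps)
        finally show ?thesis unfolding E_def using True by simp
      next
        case False
        have "L (Suc n) \<omega> = (exp (\<beta> (Suc m) * z (Suc m)) * qdeath M \<tau> m + h (Suc m) powr \<beta> (Suc m) * psurv M \<tau> m)
             powr (\<beta> m / \<beta> (Suc m))"
          unfolding Lsuc elim using False by simp
        also have "\<dots> = h m powr \<beta> m"
          unfolding hm powr_powr by simp
        finally show ?thesis unfolding E_def using False by simp
      qed
    qed
    then show ?case unfolding m_def by simp
  qed
  have main: "AE \<omega> in M. Lfun M \<tau> T \<alpha> (\<lambda>x. - Z x) t \<omega> = E t \<omega>" if "1 \<le> t" "t \<le> T" for t
  proof -
    have "T - t < T" using that by simp
    from claim[OF this] have "AE \<omega> in M. L (T - t) \<omega> = E (T - (T - t)) \<omega>" .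
    moreover have "T - (T - t) = t" using that by simp
    ultimately show ?thesis by (simp add: Lfun_def L_def)
  qed
  have ceil1: "nat \<lceil>x\<rceil> = k" if "real k - 1 < x" "x \<le> real k" for x :: real and k :: nat
  proof -
    have "\<lceil>x\<rceil> = int k" using that by (simp add: ceiling_eq_iff)
    then show ?thesis by simp
  qed
  show ?thesis
  proof
    show "AE \<omega> in M. Lfun M \<tau> T \<alpha> (\<lambda>x. - Z x) 1 \<omega> =
            exp (betaT T \<alpha> 1 * z 1) * Dind \<tau> 1 \<omega>
            + hfun M \<tau> T \<alpha> z 1 powr betaT T \<alpha> 1 * (1 - Dind \<tau> 1 \<omega>)"
      using main[OF order_refl assms(5)] AE_space
    proof eventually_elim
      case (elim \<omega>)
      have tp: "\<tau> \<omega> > 0" using pos elim by blast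
      show ?case
      proof (cases "\<tau> \<omega> \<le> 1")
        case True
        then have "nat \<lceil>\<tau> \<omega>\<rceil> = 1" using tp by (intro ceil1) auto
        then show ?thesis using elim True by (simp add: E_def Dind_def \<beta>_def)
      next
        case False
        then show ?thesis using elim by (simp add: E_def Dind_def \<beta>_def h_def)
      qed
    qed
    show "\<forall>t\<in>{2..T}. AE \<omega> in M. Lfun M \<tau> T \<alpha> (\<lambda>x. - Z x) t \<omega> =
            exp (betaT T \<alpha> t * (\<Sum>s\<in>{1..t-1}. (z s - z (s + 1)) * Dind \<tau> s \<omega>))
            * (exp (betaT T \<alpha> t * z t) * Dind \<tau> t \<omega>
               + hfun M \<tau> T \<alpha> z t powr betaT T \<alpha> t * (1 - Dind \<tau> t \<omega>))"
    proof
      fix t assume t: "t \<in> {2..T}"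
      have t1': "1 \<le> t" and t2': "t \<le> T" using t by auto
      show "AE \<omega> in M. Lfun M \<tau> T \<alpha> (\<lambda>x. - Z x) t \<omega> =
            exp (betaT T \<alpha> t * (\<Sum>s\<in>{1..t-1}. (z s - z (s + 1)) * Dind \<tau> s \<omega>))
            * (exp (betaT T \<alpha> t * z t) * Dind \<tau> t \<omega>
               + hfun M \<tau> T \<alpha> z t powr betaT T \<alpha> t * (1 - Dind \<tau> t \<omega>))"
        using main[OF t1' t2'] AE_space
      proof eventually_elim
        case (elim \<omega>)
        have tp: "\<tau> \<omega> > 0" using pos elim by blast
        have t1: "t - 1 + 1 = t" using t by simp
        have rt: "real (t - 1) = real t - 1" using t by (simp add: of_nat_diff)
        have sv: "(\<Sum>s\<in>{1..t-1}. (z s - z (s + 1)) * Dind \<tau> s \<omega>)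
            = (if \<tau> \<omega> \<le> real (t-1) then z (nat \<lceil>\<tau> \<omega>\<rceil>) - z t else 0)"
          unfolding Dind_def using tele_eval[OF tp, of z "t-1"] unfolding t1 .
        have Lv: "Lfun M \<tau> T \<alpha> (\<lambda>x. - Z x) t \<omega> = E t \<omega>" using elim by simp
        show ?case
        proof (cases "\<tau> \<omega> \<le> real (t-1)")
          case True
          then have "\<tau> \<omega> \<le> real t" using rt by simp
          then have D1: "Dind \<tau> t \<omega> = 1" by (simp add: Dind_def)
          have ar: "betaT T \<alpha> t * (z (nat \<lceil>\<tau> \<omega>\<rceil>) - z t) + betaT T \<alpha> t * z t = betaT T \<alpha> t * z (nat \<lceil>\<tau> \<omega>\<rceil>)"
            by (simp add: algebra_simps)
          have ex: "exp (betaT T \<alpha> t * (z (nat \<lceil>\<tau> \<omega>\<rceil>) - z t)) * exp (betaT T \<alpha> t * z t) = exp (betaT T \<alpha> t * z (nat \<lceil>\<tau> \<omega>\<rceil>))"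
            unfolding mult_exp_exp ar ..
          have "E t \<omega> = exp (betaT T \<alpha> t * z (nat \<lceil>\<tau> \<omega>\<rceil>))" unfolding E_def \<beta>_def using \<open>\<tau> \<omega> \<le> real t\<close> by simp
          then show ?thesis unfolding Lv sv D1 using True ex by simp
        next
          case False
          show ?thesis
          proof (cases "\<tau> \<omega> \<le> real t")
            case True
            then have "nat \<lceil>\<tau> \<omega>\<rceil> = t" using False rt by (intro ceil1) auto
            then show ?thesis unfolding Lv sv using True False by (simp add: E_def Dind_def \<beta>_def)
          next
            case False2: False
            then show ?thesis unfolding Lv sv using False by (simp add: E_def Dind_def \<beta>_def h_def)
          qed
        qed
      qed
    qed
  qed
qed

end
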